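(* Let $M$ be a module over a ring. For all $X,A,B\subseteq M$, $$X\oplus(A\cap B)=\bigcap_{Y\subseteq X}\Big((Y\oplus A)\cup\big((X\setminus Y)\oplus B\big)\Big).$$
   Context: For $A,B\subseteq M$, the Minkowski addition is $A\oplus B=\{a+b : a\in A, b\in B\}$. *)

theory Defs
  imports Main "HOL-Library.Set_Algebras"
begin

end

theory Submission
  imports Defs
begin

theorem mainTheorem16:
  fixes X A B :: "'m::ab_group_add set"
  shows "X + (A \<inter> B) = (\<Inter>Y\<in>Pow X. (Y + A) \<union> ((X - Y) + B))"
proof
  show "X + (A \<inter> B) \<subseteq> (\<Inter>Y\<in>Pow X. (Y + A) \<union> ((X - Y) + B))"
  proof
    fix z assume "z \<in> X + (A \<inter> B)"
    then obtain x c where xc: "x \<in> X" "c \<in> A" "c \<in> B" "z = x + c"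
      by (auto simp: set_plus_def)
    show "z \<in> (\<Inter>Y\<in>Pow X. (Y + A) \<union> ((X - Y) + B))"
    proof
      fix Y assume "Y \<in> Pow X"
      show "z \<in> (Y + A) \<union> ((X - Y) + B)"
      proof (cases "x \<in> Y")
        case True then show ?thesis using xc by (auto intro: set_plus_intro)
      next
        case False then show ?thesis using xc by (auto intro: set_plus_intro)
      qed
    qed
  qed
next
  show "(\<Inter>Y\<in>Pow X. (Y + A) \<union> ((X - Y) + B)) \<subseteq> X + (A \<inter> B)"
  proof
    fix z assume z: "z \<in> (\<Inter>Y\<in>Pow X. (Y + A) \<union> ((X - Y) + B))"
    define Y where "Y = {x \<in> X. z - x \<notin> A}"
    have "Y \<in> Pow X" by (auto simp: Y_def)
    with z have "z \<in> (Y + A) \<union> ((X - Y) + B)" by blast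
    moreover have "z \<notin> Y + A"
    proof
      assume "z \<in> Y + A"
      then obtain y a where "y \<in> Y" "a \<in> A" "z = y + a" by (auto simp: set_plus_def)
      then show False by (auto simp: Y_def)
    qed
    ultimately have "z \<in> (X - Y) + B" by blast
    then obtain x b where xb: "x \<in> X" "x \<notin> Y" "b \<in> B" "z = x + b" by (auto simp: set_plus_def)
    then have "b \<in> A" by (auto simp: Y_def)
    with xb show "z \<in> X + (A \<inter> B)" by (auto intro: set_plus_intro)
  qed
qed

end
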